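(* There exist polynomials $N$ and $D$ with rational coefficients in ten variables such that, for every convex cyclic pentagon with area $A$, vertex-triangle areas $(0),(1),(2),(3),(4)$ and side lengths $a_0,\dots,a_4$, $$D\big((0),\dots,(4),a_0^2,\dots,a_4^2\big)\cdot A \;=\; N\big((0),\dots,(4),a_0^2,\dots,a_4^2\big),$$ and $D$ does not vanish identically on such data. In other words, the area of a cyclic pentagon is a rational function of the areas of its vertex triangles and the squares of its side lengths.
   Context: A cyclic pentagon is a pentagon inscribed in a circle. Its vertices are labelled $0,1,2,3,4$ in cyclic order, with indices taken mod $5$. The vertex triangle at vertex $i$ is the triangle with vertices $i-1,i,i+1$, and $(i)$ denotes its area. $A$ denotes the area of the pentagon. *)

theory Defs
  imports Complex_Main
begin

(* Multivariate polynomials with rational coefficients in the variables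
   x_0, ..., x_9, represented as a finite list of terms (c, e) standing for
   the monomial  c * x_0^(e 0) * ... * x_9^(e 9).  Every polynomial in
   Q[x_0,...,x_9] is of this form. *)
type_synonym ratpoly10 = "(rat \<times> (nat \<Rightarrow> nat)) list"

definition poly10_eval :: "ratpoly10 \<Rightarrow> (nat \<Rightarrow> real) \<Rightarrow> real" where
  "poly10_eval P x = (\<Sum>(c, e) \<leftarrow> P. of_rat c * (\<Prod>i<10. x i ^ e i))"

definition cross :: "complex \<Rightarrow> complex \<Rightarrow> real" where
  "cross z w = Re z * Im w - Im z * Re w"

definition vx :: "(nat \<Rightarrow> complex) \<Rightarrow> nat \<Rightarrow> complex" where
  "vx p i = p (i mod 5)"

definition cyclic_pentagon :: "(nat \<Rightarrow> complex) \<Rightarrow> bool" where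
  "cyclic_pentagon p \<longleftrightarrow> (\<exists>c r. r > 0 \<and> (\<forall>i<5. cmod (p i - c) = r))"

definition convex_pentagon :: "(nat \<Rightarrow> complex) \<Rightarrow> bool" where
  "convex_pentagon p \<longleftrightarrow>
     (\<forall>i<5. \<forall>j<5. j \<noteq> i \<and> j \<noteq> (i + 1) mod 5 \<longrightarrow>
        cross (vx p (i + 1) - vx p i) (p j - vx p i) > 0) \<or>
     (\<forall>i<5. \<forall>j<5. j \<noteq> i \<and> j \<noteq> (i + 1) mod 5 \<longrightarrow>
        cross (vx p (i + 1) - vx p i) (p j - vx p i) < 0)"

definition pent_area :: "(nat \<Rightarrow> complex) \<Rightarrow> real" where
  "pent_area p = \<bar>(\<Sum>i<5. cross (vx p i) (vx p (i + 1))) / 2\<bar>"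

(* Area (i) of the vertex triangle with vertices i-1, i, i+1. *)
definition vtri_area :: "(nat \<Rightarrow> complex) \<Rightarrow> nat \<Rightarrow> real" where
  "vtri_area p i = \<bar>cross (vx p i - vx p (i + 4)) (vx p (i + 1) - vx p (i + 4)) / 2\<bar>"

definition side :: "(nat \<Rightarrow> complex) \<Rightarrow> nat \<Rightarrow> real" where
  "side p i = cmod (vx p (i + 1) - vx p i)"

definition pent_data :: "(nat \<Rightarrow> complex) \<Rightarrow> nat \<Rightarrow> real" where
  "pent_data p k = (if k < 5 then vtri_area p k else (side p (k - 5))^2)"

end

theory Submission
  imports Defs
begin

definition pvar :: "nat \<Rightarrow> ratpoly10" where
  "pvar k = [(1, \<lambda>i. if i = k then 1 else 0)]"
definition pconst :: "rat \<Rightarrow> ratpoly10" where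
  "pconst c = [(c, \<lambda>i. 0)]"
definition padd :: "ratpoly10 \<Rightarrow> ratpoly10 \<Rightarrow> ratpoly10" where
  "padd P Q = P @ Q"
definition pneg :: "ratpoly10 \<Rightarrow> ratpoly10" where
  "pneg P = map (\<lambda>(c,e). (-c, e)) P"
definition pmul :: "ratpoly10 \<Rightarrow> ratpoly10 \<Rightarrow> ratpoly10" where
  "pmul P Q = concat (map (\<lambda>(c,e). map (\<lambda>(d,f). (c*d, \<lambda>i. e i + f i)) Q) P)"

lemma eval_Nil: "poly10_eval [] x = 0" by (simp add: poly10_eval_def)
lemma eval_Cons: "poly10_eval ((c,e) # P) x = of_rat c * (\<Prod>i<10. x i ^ e i) + poly10_eval P x"
  by (simp add: poly10_eval_def)

lemma eval_pvar: "k < 10 \<Longrightarrow> poly10_eval (pvar k) x = x k"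
proof -
  assume k: "k < 10"
  have "(\<Prod>i<10. x i ^ (if i = k then 1 else 0)) = (\<Prod>i<10. if i = k then x i else 1)"
    by (rule prod.cong) auto
  also have "\<dots> = x k" using k by (simp add: prod.delta)
  finally show ?thesis by (simp add: pvar_def poly10_eval_def)
qed

lemma eval_pconst: "poly10_eval (pconst c) x = of_rat c"
  by (simp add: pconst_def poly10_eval_def)

lemma eval_padd: "poly10_eval (padd P Q) x = poly10_eval P x + poly10_eval Q x"
  by (simp add: padd_def poly10_eval_def)

lemma eval_pneg: "poly10_eval (pneg P) x = - poly10_eval P x"
  by (induction P) (auto simp: pneg_def eval_Nil eval_Cons of_rat_minus)

lemma eval_map_mul: "poly10_eval (map (\<lambda>(d,f). (c*d, \<lambda>i. e i + f i)) Q) x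
   = of_rat c * (\<Prod>i<10. x i ^ e i) * poly10_eval Q x"
  by (induction Q) (auto simp: eval_Nil eval_Cons of_rat_mult power_add prod.distrib algebra_simps)

lemma eval_append: "poly10_eval (P @ Q) x = poly10_eval P x + poly10_eval Q x"
  by (simp add: poly10_eval_def)

lemma eval_pmul: "poly10_eval (pmul P Q) x = poly10_eval P x * poly10_eval Q x"
proof (induction P)
  case Nil then show ?case by (simp add: pmul_def eval_Nil)
next
  case (Cons a P)
  obtain c e where a: "a = (c,e)" by (cases a)
  have "pmul (a # P) Q = map (\<lambda>(d,f). (c*d, \<lambda>i. e i + f i)) Q @ pmul P Q"
    by (simp add: pmul_def a)
  then show ?case using Cons by (simp only: eval_append eval_map_mul a eval_Cons) (simp add: algebra_simps)
qed

definition spf :: "nat \<Rightarrow> real \<Rightarrow> real \<Rightarrow> real \<Rightarrow> real \<Rightarrow> real \<Rightarrow> real \<Rightarrow> real \<Rightarrow> real \<Rightarrow> real \<Rightarrow> real \<Rightarrow> real" where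
  "spf i T0 T1 T2 T3 T4 b0 b1 b2 b3 b4 = (if i = 0 then (T0*b1*b2*b3 - T4*b0*b1*b2 + T3*b4*b0*b1 - T2*b3*b4*b0 + T1*b2*b3*b4) else if i = 1 then (T1*b2*b3*b4 - T0*b1*b2*b3 + T4*b0*b1*b2 - T3*b4*b0*b1 + T2*b3*b4*b0) else if i = 2 then (T2*b3*b4*b0 - T1*b2*b3*b4 + T0*b1*b2*b3 - T4*b0*b1*b2 + T3*b4*b0*b1) else if i = 3 then (T3*b4*b0*b1 - T2*b3*b4*b0 + T1*b2*b3*b4 - T0*b1*b2*b3 + T4*b0*b1*b2) else (T4*b0*b1*b2 - T3*b4*b0*b1 + T2*b3*b4*b0 - T1*b2*b3*b4 + T0*b1*b2*b3))"
definition Dfun where "Dfun T0 T1 T2 T3 T4 b0 b1 b2 b3 b4 = 4*(b0*b1*b2*b3*b4)*(b1*(spf 1 T0 T1 T2 T3 T4 b0 b1 b2 b3 b4)^2 - b0*(spf 0 T0 T1 T2 T3 T4 b0 b1 b2 b3 b4)^2)"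
definition Nfun where "Nfun T0 T1 T2 T3 T4 b0 b1 b2 b3 b4 = b0*b1*((spf 1 T0 T1 T2 T3 T4 b0 b1 b2 b3 b4)^2 - (spf 0 T0 T1 T2 T3 T4 b0 b1 b2 b3 b4)^2)*(b0*(spf 0 T0 T1 T2 T3 T4 b0 b1 b2 b3 b4) + b1*(spf 1 T0 T1 T2 T3 T4 b0 b1 b2 b3 b4) + b2*(spf 2 T0 T1 T2 T3 T4 b0 b1 b2 b3 b4) + b3*(spf 3 T0 T1 T2 T3 T4 b0 b1 b2 b3 b4) + b4*(spf 4 T0 T1 T2 T3 T4 b0 b1 b2 b3 b4))"

lemma core:
  fixes T0 T1 T2 T3 T4 b0 b1 b2 b3 b4 U0 U1 U2 U3 U4 \<rho> :: real
  assumes nz: "b0 \<noteq> 0" "b1 \<noteq> 0" "b2 \<noteq> 0" "b3 \<noteq> 0" "b4 \<noteq> 0"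
  and E0: "\<rho>*T0 = b4*U0 + b0*U4" and E1: "\<rho>*T1 = b0*U1 + b1*U0"
  and E2: "\<rho>*T2 = b1*U2 + b2*U1" and E3: "\<rho>*T3 = b2*U3 + b3*U2"
  and E4: "\<rho>*T4 = b3*U4 + b4*U3"
  and Q0: "16*U0^2 = b0*(2*\<rho> - b0)" and Q1: "16*U1^2 = b1*(2*\<rho> - b1)"
  shows "Dfun T0 T1 T2 T3 T4 b0 b1 b2 b3 b4 * (U0+U1+U2+U3+U4) = Nfun T0 T1 T2 T3 T4 b0 b1 b2 b3 b4"
proof -
  define t0 where "t0 = T0/(b4*b0)"
  define t1 where "t1 = T1/(b0*b1)"
  define t2 where "t2 = T2/(b1*b2)"
  define t3 where "t3 = T3/(b2*b3)"
  define t4 where "t4 = T4/(b3*b4)"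
  define W0 where "W0 = U0/b0"
  define W1 where "W1 = U1/b1"
  define W2 where "W2 = U2/b2"
  define W3 where "W3 = U3/b3"
  define W4 where "W4 = U4/b4"
  have w0: "W0 + W4 = \<rho>*t0" using E0 nz unfolding t0_def W0_def W4_def by (simp add: field_simps)
  have w1: "W1 + W0 = \<rho>*t1" using E1 nz unfolding t1_def W1_def W0_def by (simp add: field_simps)
  have w2: "W2 + W1 = \<rho>*t2" using E2 nz unfolding t2_def W2_def W1_def by (simp add: field_simps)
  have w3: "W3 + W2 = \<rho>*t3" using E3 nz unfolding t3_def W3_def W2_def by (simp add: field_simps)
  have w4: "W4 + W3 = \<rho>*t4" using E4 nz unfolding t4_def W4_def W3_def by (simp add: field_simps)
  define s0 where "s0 = (t0 - t4 + t3 - t2 + t1)"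
  have "2*W0 = \<rho>*s0" unfolding s0_def using w0 w1 w2 w3 w4 by (simp add: ring_distribs; linarith)
  hence u0: "U0 = \<rho>*b0*s0/2" using nz unfolding W0_def by (simp add: field_simps)
  define s1 where "s1 = (t1 - t0 + t4 - t3 + t2)"
  have "2*W1 = \<rho>*s1" unfolding s1_def using w0 w1 w2 w3 w4 by (simp add: ring_distribs; linarith)
  hence u1: "U1 = \<rho>*b1*s1/2" using nz unfolding W1_def by (simp add: field_simps)
  define s2 where "s2 = (t2 - t1 + t0 - t4 + t3)"
  have "2*W2 = \<rho>*s2" unfolding s2_def using w0 w1 w2 w3 w4 by (simp add: ring_distribs; linarith)
  hence u2: "U2 = \<rho>*b2*s2/2" using nz unfolding W2_def by (simp add: field_simps)
  define s3 where "s3 = (t3 - t2 + t1 - t0 + t4)"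
  have "2*W3 = \<rho>*s3" unfolding s3_def using w0 w1 w2 w3 w4 by (simp add: ring_distribs; linarith)
  hence u3: "U3 = \<rho>*b3*s3/2" using nz unfolding W3_def by (simp add: field_simps)
  define s4 where "s4 = (t4 - t3 + t2 - t1 + t0)"
  have "2*W4 = \<rho>*s4" unfolding s4_def using w0 w1 w2 w3 w4 by (simp add: ring_distribs; linarith)
  hence u4: "U4 = \<rho>*b4*s4/2" using nz unfolding W4_def by (simp add: field_simps)
  have "4*\<rho>^2*b0^2*s0^2 = b0*(2*\<rho> - b0)" using Q0 unfolding u0 by (simp add: power2_eq_square algebra_simps)
  hence r0: "4*\<rho>^2*b0*s0^2 = 2*\<rho> - b0" using nz by (simp add: power2_eq_square; metis mult.assoc mult.left_commute mult_left_cancel)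
  have "4*\<rho>^2*b1^2*s1^2 = b1*(2*\<rho> - b1)" using Q1 unfolding u1 by (simp add: power2_eq_square algebra_simps)
  hence r1: "4*\<rho>^2*b1*s1^2 = 2*\<rho> - b1" using nz by (simp add: power2_eq_square; metis mult.assoc mult.left_commute mult_left_cancel)
  have F: "2*\<rho>*(b1*s1^2 - b0*s0^2) = b0*b1*(s1^2 - s0^2)"
  proof -
    have "(4*\<rho>^2*b0*s0^2)*(b1*s1^2) - (4*\<rho>^2*b1*s1^2)*(b0*s0^2) = 0" by (simp add: algebra_simps)
    hence "(2*\<rho> - b0)*(b1*s1^2) - (2*\<rho> - b1)*(b0*s0^2) = 0" unfolding r0 r1 .
    thus ?thesis by (simp add: algebra_simps)
  qed
  have sp0: "spf 0 T0 T1 T2 T3 T4 b0 b1 b2 b3 b4 = (b0*b1*b2*b3*b4)*s0" unfolding spf_def s0_def t0_def t1_def t2_def t3_def t4_def using nz by (simp add: field_simps)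
  have sp1: "spf 1 T0 T1 T2 T3 T4 b0 b1 b2 b3 b4 = (b0*b1*b2*b3*b4)*s1" unfolding spf_def s1_def t0_def t1_def t2_def t3_def t4_def using nz by (simp add: field_simps)
  have sp2: "spf 2 T0 T1 T2 T3 T4 b0 b1 b2 b3 b4 = (b0*b1*b2*b3*b4)*s2" unfolding spf_def s2_def t0_def t1_def t2_def t3_def t4_def using nz by (simp add: field_simps)
  have sp3: "spf 3 T0 T1 T2 T3 T4 b0 b1 b2 b3 b4 = (b0*b1*b2*b3*b4)*s3" unfolding spf_def s3_def t0_def t1_def t2_def t3_def t4_def using nz by (simp add: field_simps)
  have sp4: "spf 4 T0 T1 T2 T3 T4 b0 b1 b2 b3 b4 = (b0*b1*b2*b3*b4)*s4" unfolding spf_def s4_def t0_def t1_def t2_def t3_def t4_def using nz by (simp add: field_simps)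
  have "Dfun T0 T1 T2 T3 T4 b0 b1 b2 b3 b4 * (U0+U1+U2+U3+U4) = (b0*b1*b2*b3*b4)^3 * (2*\<rho>*(b1*s1^2 - b0*s0^2)) * (b0*s0+b1*s1+b2*s2+b3*s3+b4*s4)"
    unfolding Dfun_def sp0 sp1 u0 u1 u2 u3 u4 by (simp add: power2_eq_square power3_eq_cube algebra_simps)
  also have "\<dots> = Nfun T0 T1 T2 T3 T4 b0 b1 b2 b3 b4" unfolding F Nfun_def sp0 sp1 sp2 sp3 sp4 by (simp add: power2_eq_square power3_eq_cube algebra_simps)
  finally show ?thesis .
qed

definition spP0 :: ratpoly10 where "spP0 = (padd ((padd ((padd ((padd (pmul (pmul (pmul (pvar 0) (pvar 6)) (pvar 7)) (pvar 8)) (pneg (pmul (pmul (pmul (pvar 4) (pvar 5)) (pvar 6)) (pvar 7))))) ((pmul (pmul (pmul (pvar 3) (pvar 9)) (pvar 5)) (pvar 6))))) (pneg (pmul (pmul (pmul (pvar 2) (pvar 8)) (pvar 9)) (pvar 5))))) ((pmul (pmul (pmul (pvar 1) (pvar 7)) (pvar 8)) (pvar 9))))"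
definition spP1 :: ratpoly10 where "spP1 = (padd ((padd ((padd ((padd (pmul (pmul (pmul (pvar 1) (pvar 7)) (pvar 8)) (pvar 9)) (pneg (pmul (pmul (pmul (pvar 0) (pvar 6)) (pvar 7)) (pvar 8))))) ((pmul (pmul (pmul (pvar 4) (pvar 5)) (pvar 6)) (pvar 7))))) (pneg (pmul (pmul (pmul (pvar 3) (pvar 9)) (pvar 5)) (pvar 6))))) ((pmul (pmul (pmul (pvar 2) (pvar 8)) (pvar 9)) (pvar 5))))"
definition spP2 :: ratpoly10 where "spP2 = (padd ((padd ((padd ((padd (pmul (pmul (pmul (pvar 2) (pvar 8)) (pvar 9)) (pvar 5)) (pneg (pmul (pmul (pmul (pvar 1) (pvar 7)) (pvar 8)) (pvar 9))))) ((pmul (pmul (pmul (pvar 0) (pvar 6)) (pvar 7)) (pvar 8))))) (pneg (pmul (pmul (pmul (pvar 4) (pvar 5)) (pvar 6)) (pvar 7))))) ((pmul (pmul (pmul (pvar 3) (pvar 9)) (pvar 5)) (pvar 6))))"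
definition spP3 :: ratpoly10 where "spP3 = (padd ((padd ((padd ((padd (pmul (pmul (pmul (pvar 3) (pvar 9)) (pvar 5)) (pvar 6)) (pneg (pmul (pmul (pmul (pvar 2) (pvar 8)) (pvar 9)) (pvar 5))))) ((pmul (pmul (pmul (pvar 1) (pvar 7)) (pvar 8)) (pvar 9))))) (pneg (pmul (pmul (pmul (pvar 0) (pvar 6)) (pvar 7)) (pvar 8))))) ((pmul (pmul (pmul (pvar 4) (pvar 5)) (pvar 6)) (pvar 7))))"
definition spP4 :: ratpoly10 where "spP4 = (padd ((padd ((padd ((padd (pmul (pmul (pmul (pvar 4) (pvar 5)) (pvar 6)) (pvar 7)) (pneg (pmul (pmul (pmul (pvar 3) (pvar 9)) (pvar 5)) (pvar 6))))) ((pmul (pmul (pmul (pvar 2) (pvar 8)) (pvar 9)) (pvar 5))))) (pneg (pmul (pmul (pmul (pvar 1) (pvar 7)) (pvar 8)) (pvar 9))))) ((pmul (pmul (pmul (pvar 0) (pvar 6)) (pvar 7)) (pvar 8))))"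
definition Dpoly :: ratpoly10 where "Dpoly = pmul (pmul (pconst 4) (pmul (pmul (pmul (pmul (pvar 5) (pvar 6)) (pvar 7)) (pvar 8)) (pvar 9))) (padd (pmul (pvar 6) (pmul spP1 spP1)) (pneg (pmul (pvar 5) (pmul spP0 spP0))))"
definition Npoly :: ratpoly10 where "Npoly = pmul (pmul (pmul (pvar 5) (pvar 6)) (padd (pmul spP1 spP1) (pneg (pmul spP0 spP0)))) (padd (padd (padd (padd (pmul (pvar 5) spP0) (pmul (pvar 6) spP1)) (pmul (pvar 7) spP2)) (pmul (pvar 8) spP3)) (pmul (pvar 9) spP4))"
lemma eval_spP0: "poly10_eval spP0 x = spf 0 (x 0) (x 1) (x 2) (x 3) (x 4) (x 5) (x 6) (x 7) (x 8) (x 9)" by (simp add: spP0_def spf_def eval_pmul eval_padd eval_pneg eval_pvar)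
lemma eval_spP1: "poly10_eval spP1 x = spf 1 (x 0) (x 1) (x 2) (x 3) (x 4) (x 5) (x 6) (x 7) (x 8) (x 9)" by (simp add: spP1_def spf_def eval_pmul eval_padd eval_pneg eval_pvar)
lemma eval_spP2: "poly10_eval spP2 x = spf 2 (x 0) (x 1) (x 2) (x 3) (x 4) (x 5) (x 6) (x 7) (x 8) (x 9)" by (simp add: spP2_def spf_def eval_pmul eval_padd eval_pneg eval_pvar)
lemma eval_spP3: "poly10_eval spP3 x = spf 3 (x 0) (x 1) (x 2) (x 3) (x 4) (x 5) (x 6) (x 7) (x 8) (x 9)" by (simp add: spP3_def spf_def eval_pmul eval_padd eval_pneg eval_pvar)
lemma eval_spP4: "poly10_eval spP4 x = spf 4 (x 0) (x 1) (x 2) (x 3) (x 4) (x 5) (x 6) (x 7) (x 8) (x 9)" by (simp add: spP4_def spf_def eval_pmul eval_padd eval_pneg eval_pvar)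
lemma eval_Dpoly: "poly10_eval Dpoly x = Dfun (x 0) (x 1) (x 2) (x 3) (x 4) (x 5) (x 6) (x 7) (x 8) (x 9)" by (simp add: Dpoly_def Dfun_def eval_spP0 eval_spP1 eval_pmul eval_padd eval_pneg eval_pvar eval_pconst power2_eq_square)
lemma eval_Npoly: "poly10_eval Npoly x = Nfun (x 0) (x 1) (x 2) (x 3) (x 4) (x 5) (x 6) (x 7) (x 8) (x 9)" by (simp add: Npoly_def Nfun_def eval_spP0 eval_spP1 eval_spP2 eval_spP3 eval_spP4 eval_pmul eval_padd eval_pneg eval_pvar eval_pconst power2_eq_square)


lemma dist_circ:
  fixes a1 a2 b1 b2 R :: real
  assumes "a1^2+a2^2 = R" "b1^2+b2^2 = R"
  shows "(b1-a1)^2+(b2-a2)^2 = 2*R - 2*(a1*b1+a2*b2)"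
proof -
  have "(b1-a1)^2+(b2-a2)^2 = (a1^2+a2^2) + (b1^2+b2^2) - 2*(a1*b1+a2*b2)"
    by (simp add: power2_eq_square algebra_simps)
  then show ?thesis using assms by simp
qed

lemma Eid:
  fixes a1 a2 b1 b2 c1 c2 R :: real
  assumes "a1^2+a2^2 = R" "b1^2+b2^2 = R" "c1^2+c2^2 = R"
  shows "2*R*(((b1-a1)*(c2-a2)-(b2-a2)*(c1-a1))/2) = ((b1-a1)^2+(b2-a2)^2)*((b1*c2-b2*c1)/2) + ((c1-b1)^2+(c2-b2)^2)*((a1*b2-a2*b1)/2)"
proof -
  note h1 = dist_circ[OF assms(1,2)] and h2 = dist_circ[OF assms(2,3)]
  show ?thesis unfolding h1 h2 assms(2)[symmetric] by (simp add: power2_eq_square field_simps)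
qed

lemma Qid:
  fixes a1 a2 b1 b2 R :: real
  assumes "a1^2+a2^2 = R" "b1^2+b2^2 = R"
  shows "16*((a1*b2-a2*b1)/2)^2 = ((b1-a1)^2+(b2-a2)^2)*(2*(2*R) - ((b1-a1)^2+(b2-a2)^2))"
proof -
  note h1 = dist_circ[OF assms(1,2)]
  have RR: "R*R = (a1^2+a2^2)*(b1^2+b2^2)" using assms by simp
  have "((b1-a1)^2+(b2-a2)^2)*(2*(2*R) - ((b1-a1)^2+(b2-a2)^2)) = 4*(R*R) - 4*(a1*b1+a2*b2)^2"
    unfolding h1 by (simp add: power2_eq_square algebra_simps)
  also have "\<dots> = 4*((a1^2+a2^2)*(b1^2+b2^2)) - 4*(a1*b1+a2*b2)^2" unfolding RR ..
  also have "\<dots> = 16*((a1*b2-a2*b1)/2)^2" by (simp add: power2_eq_square algebra_simps)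
  finally show ?thesis ..
qed

lemma vxn: "(n::nat) mod 5 = m \<Longrightarrow> vx p n = p m" by (simp add: vx_def)

lemma sum5: "(\<Sum>i<5. f i) = f 0 + f 1 + f 2 + f 3 + f (4::nat)"
  by (simp add: eval_nat_numeral)

lemma signed_core:
  fixes T0 T1 T2 T3 T4 b0 b1 b2 b3 b4 U0 U1 U2 U3 U4 \<rho> e :: real
  assumes e: "e = 1 \<or> e = -1"
  and nz: "b0 \<noteq> 0" "b1 \<noteq> 0" "b2 \<noteq> 0" "b3 \<noteq> 0" "b4 \<noteq> 0"
  and E0: "\<rho>*T0 = b4*U0 + b0*U4" and E1: "\<rho>*T1 = b0*U1 + b1*U0"
  and E2: "\<rho>*T2 = b1*U2 + b2*U1" and E3: "\<rho>*T3 = b2*U3 + b3*U2"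
  and E4: "\<rho>*T4 = b3*U4 + b4*U3"
  and Q0: "16*U0^2 = b0*(2*\<rho> - b0)" and Q1: "16*U1^2 = b1*(2*\<rho> - b1)"
  shows "Dfun (e*T0) (e*T1) (e*T2) (e*T3) (e*T4) b0 b1 b2 b3 b4 * (e*(U0+U1+U2+U3+U4)) = Nfun (e*T0) (e*T1) (e*T2) (e*T3) (e*T4) b0 b1 b2 b3 b4"
proof -
  have e2: "e^2 = 1" using e by auto
  have "Dfun (e*T0) (e*T1) (e*T2) (e*T3) (e*T4) b0 b1 b2 b3 b4 * (e*U0+e*U1+e*U2+e*U3+e*U4) = Nfun (e*T0) (e*T1) (e*T2) (e*T3) (e*T4) b0 b1 b2 b3 b4"
  proof (rule core[OF nz])
    show "\<rho>*(e*T0) = b4*(e*U0) + b0*(e*U4)" unfolding mult.left_commute[of "\<rho>" e] E0 by (simp add: algebra_simps)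
    show "\<rho>*(e*T1) = b0*(e*U1) + b1*(e*U0)" unfolding mult.left_commute[of "\<rho>" e] E1 by (simp add: algebra_simps)
    show "\<rho>*(e*T2) = b1*(e*U2) + b2*(e*U1)" unfolding mult.left_commute[of "\<rho>" e] E2 by (simp add: algebra_simps)
    show "\<rho>*(e*T3) = b2*(e*U3) + b3*(e*U2)" unfolding mult.left_commute[of "\<rho>" e] E3 by (simp add: algebra_simps)
    show "\<rho>*(e*T4) = b3*(e*U4) + b4*(e*U3)" unfolding mult.left_commute[of "\<rho>" e] E4 by (simp add: algebra_simps)
    show "16*(e*U0)^2 = b0*(2*\<rho> - b0)" unfolding power_mult_distrib e2 using Q0 by simp
    show "16*(e*U1)^2 = b1*(2*\<rho> - b1)" unfolding power_mult_distrib e2 using Q1 by simp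
  qed
  thus ?thesis by (simp add: distrib_left)
qed

lemma main_id:
  assumes cyc: "cyclic_pentagon p" and cvx: "convex_pentagon p"
  shows "Dfun (pent_data p 0) (pent_data p 1) (pent_data p 2) (pent_data p 3) (pent_data p 4) (pent_data p 5) (pent_data p 6) (pent_data p 7) (pent_data p 8) (pent_data p 9) * pent_area p = Nfun (pent_data p 0) (pent_data p 1) (pent_data p 2) (pent_data p 3) (pent_data p 4) (pent_data p 5) (pent_data p 6) (pent_data p 7) (pent_data p 8) (pent_data p 9)"
proof -
  obtain c r where r: "r > 0" and hc: "\<forall>i<5. cmod (p i - c) = r" using cyc unfolding cyclic_pentagon_def by blast
  define X where "X = (\<lambda>k. Re (p k) - Re c)"
  define Y where "Y = (\<lambda>k. Im (p k) - Im c)"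
  define R where "R = r^2"
  have circ: "X k ^2 + Y k ^2 = R" if "k < 5" for k
  proof -
    have "cmod (p k - c) ^2 = R" using hc that R_def by simp
    thus ?thesis unfolding cmod_power2 X_def Y_def by simp
  qed
  have c0: "X 0^2 + Y 0^2 = R" and c1: "X 1^2 + Y 1^2 = R" and c2: "X 2^2 + Y 2^2 = R"
    and c3: "X 3^2 + Y 3^2 = R" and c4: "X 4^2 + Y 4^2 = R" using circ by auto
  define g where "g = (\<lambda>i j. cross (vx p (i + 1) - vx p i) (p j - vx p i))"
  define t0 where "t0 = ((X 0 - X 4)*(Y 1 - Y 4) - (Y 0 - Y 4)*(X 1 - X 4))/2"
  define b0 where "b0 = ((X 1 - X 0)^2 + (Y 1 - Y 0)^2)"
  define u0 where "u0 = ((X 0*Y 1 - Y 0*X 1)/2)"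
  define t1 where "t1 = ((X 1 - X 0)*(Y 2 - Y 0) - (Y 1 - Y 0)*(X 2 - X 0))/2"
  define b1 where "b1 = ((X 2 - X 1)^2 + (Y 2 - Y 1)^2)"
  define u1 where "u1 = ((X 1*Y 2 - Y 1*X 2)/2)"
  define t2 where "t2 = ((X 2 - X 1)*(Y 3 - Y 1) - (Y 2 - Y 1)*(X 3 - X 1))/2"
  define b2 where "b2 = ((X 3 - X 2)^2 + (Y 3 - Y 2)^2)"
  define u2 where "u2 = ((X 2*Y 3 - Y 2*X 3)/2)"
  define t3 where "t3 = ((X 3 - X 2)*(Y 4 - Y 2) - (Y 3 - Y 2)*(X 4 - X 2))/2"
  define b3 where "b3 = ((X 4 - X 3)^2 + (Y 4 - Y 3)^2)"
  define u3 where "u3 = ((X 3*Y 4 - Y 3*X 4)/2)"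
  define t4 where "t4 = ((X 4 - X 3)*(Y 0 - Y 3) - (Y 4 - Y 3)*(X 0 - X 3))/2"
  define b4 where "b4 = ((X 0 - X 4)^2 + (Y 0 - Y 4)^2)"
  define u4 where "u4 = ((X 4*Y 0 - Y 4*X 0)/2)"
  have vxs: "vx p 0 = p 0" "vx p (0+1) = p 1" "vx p (0+4) = p 4" "vx p 1 = p 1" "vx p (1+1) = p 2" "vx p (1+4) = p 0" "vx p 2 = p 2" "vx p (2+1) = p 3" "vx p (2+4) = p 1" "vx p 3 = p 3" "vx p (3+1) = p 4" "vx p (3+4) = p 2" "vx p 4 = p 4" "vx p (4+1) = p 0" "vx p (4+4) = p 3" by (rule vxn, presburger)+
  have g0: "g 4 1 = 2*t0" unfolding g_def t0_def X_def Y_def vxs cross_def by (simp add: algebra_simps)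
  have g1: "g 0 2 = 2*t1" unfolding g_def t1_def X_def Y_def vxs cross_def by (simp add: algebra_simps)
  have g2: "g 1 3 = 2*t2" unfolding g_def t2_def X_def Y_def vxs cross_def by (simp add: algebra_simps)
  have g3: "g 2 4 = 2*t3" unfolding g_def t3_def X_def Y_def vxs cross_def by (simp add: algebra_simps)
  have g4: "g 3 0 = 2*t4" unfolding g_def t4_def X_def Y_def vxs cross_def by (simp add: algebra_simps)
  have g20: "g 2 0 = (X 3 - X 2)*(Y 0 - Y 2) - (Y 3 - Y 2)*(X 0 - X 2)" unfolding g_def X_def Y_def vxs cross_def by (simp add: algebra_simps)
  have vt0: "vtri_area p 0 = \<bar>t0\<bar>" unfolding vtri_area_def t0_def X_def Y_def vxs cross_def by (simp add: algebra_simps)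
  have sd0: "side p 0 ^2 = b0" unfolding side_def b0_def X_def Y_def vxs cmod_power2 by (simp add: algebra_simps)
  have vt1: "vtri_area p 1 = \<bar>t1\<bar>" unfolding vtri_area_def t1_def X_def Y_def vxs cross_def by (simp add: algebra_simps)
  have sd1: "side p 1 ^2 = b1" unfolding side_def b1_def X_def Y_def vxs cmod_power2 by (simp add: algebra_simps)
  have vt2: "vtri_area p 2 = \<bar>t2\<bar>" unfolding vtri_area_def t2_def X_def Y_def vxs cross_def by (simp add: algebra_simps)
  have sd2: "side p 2 ^2 = b2" unfolding side_def b2_def X_def Y_def vxs cmod_power2 by (simp add: algebra_simps)
  have vt3: "vtri_area p 3 = \<bar>t3\<bar>" unfolding vtri_area_def t3_def X_def Y_def vxs cross_def by (simp add: algebra_simps)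
  have sd3: "side p 3 ^2 = b3" unfolding side_def b3_def X_def Y_def vxs cmod_power2 by (simp add: algebra_simps)
  have vt4: "vtri_area p 4 = \<bar>t4\<bar>" unfolding vtri_area_def t4_def X_def Y_def vxs cross_def by (simp add: algebra_simps)
  have sd4: "side p 4 ^2 = b4" unfolding side_def b4_def X_def Y_def vxs cmod_power2 by (simp add: algebra_simps)
  have SA0: "(\<Sum>i<5. cross (vx p i) (vx p (i + 1))) / 2 = u0+u1+u2+u3+u4" unfolding sum5 vxs u0_def u1_def u2_def u3_def u4_def X_def Y_def cross_def by (simp add: field_simps)
  have SA: "pent_area p = \<bar>u0+u1+u2+u3+u4\<bar>" unfolding pent_area_def SA0 ..
  have Sdec: "u0+u1+u2+u3+u4 = t1 + t4 + g 2 0 / 2" unfolding g20 t1_def t4_def u0_def u1_def u2_def u3_def u4_def by (simp add: field_simps)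
  obtain e :: real where e: "e = 1 \<or> e = -1" and ge: "g 4 1 * e > 0" "g 0 2 * e > 0" "g 1 3 * e > 0" "g 2 4 * e > 0" "g 3 0 * e > 0" and e20: "g 2 0 * e > 0"
  proof (cases "\<forall>i<5. \<forall>j<5. j \<noteq> i \<and> j \<noteq> (i + 1) mod 5 \<longrightarrow> g i j > 0")
    case True
    have "g 4 1 > 0" "g 0 2 > 0" "g 1 3 > 0" "g 2 4 > 0" "g 3 0 > 0" "g 2 0 > 0"
      using True[rule_format, of 4 1] True[rule_format, of 0 2] True[rule_format, of 1 3]
        True[rule_format, of 2 4] True[rule_format, of 3 0] True[rule_format, of 2 0] by simp_all
    then show ?thesis using that[of 1] by simp
  next
    case False
    hence F: "\<forall>i<5. \<forall>j<5. j \<noteq> i \<and> j \<noteq> (i + 1) mod 5 \<longrightarrow> g i j < 0" using cvx unfolding convex_pentagon_def g_def by blast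
    have "g 4 1 < 0" "g 0 2 < 0" "g 1 3 < 0" "g 2 4 < 0" "g 3 0 < 0" "g 2 0 < 0"
      using F[rule_format, of 4 1] F[rule_format, of 0 2] F[rule_format, of 1 3]
        F[rule_format, of 2 4] F[rule_format, of 3 0] F[rule_format, of 2 0] by simp_all
    then show ?thesis using that[of "-1"] by simp
  qed
  have et0: "t0 * e > 0" using ge g0 by (simp add: ac_simps)
  have et1: "t1 * e > 0" using ge g1 by (simp add: ac_simps)
  have et2: "t2 * e > 0" using ge g2 by (simp add: ac_simps)
  have et3: "t3 * e > 0" using ge g3 by (simp add: ac_simps)
  have et4: "t4 * e > 0" using ge g4 by (simp add: ac_simps)
  have eS: "(u0+u1+u2+u3+u4) * e > 0" using et1 et4 e20 unfolding Sdec by (simp add: algebra_simps)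
  have absE: "\<bar>z\<bar> = e*z" if "z*e > 0" for z using e that by (auto simp: mult_less_0_iff zero_less_mult_iff)
  have nz0: "b0 \<noteq> 0"
  proof
    assume "b0 = 0"
    hence "X 1 - X 0 = 0" "Y 1 - Y 0 = 0" unfolding b0_def by (simp_all add: sum_power2_eq_zero_iff)
    hence "t1 = 0" unfolding t1_def by simp
    thus False using et1 by simp
  qed
  have nz1: "b1 \<noteq> 0"
  proof
    assume "b1 = 0"
    hence "X 2 - X 1 = 0" "Y 2 - Y 1 = 0" unfolding b1_def by (simp_all add: sum_power2_eq_zero_iff)
    hence "t2 = 0" unfolding t2_def by simp
    thus False using et2 by simp
  qed
  have nz2: "b2 \<noteq> 0"
  proof
    assume "b2 = 0"
    hence "X 3 - X 2 = 0" "Y 3 - Y 2 = 0" unfolding b2_def by (simp_all add: sum_power2_eq_zero_iff)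
    hence "t3 = 0" unfolding t3_def by simp
    thus False using et3 by simp
  qed
  have nz3: "b3 \<noteq> 0"
  proof
    assume "b3 = 0"
    hence "X 4 - X 3 = 0" "Y 4 - Y 3 = 0" unfolding b3_def by (simp_all add: sum_power2_eq_zero_iff)
    hence "t4 = 0" unfolding t4_def by simp
    thus False using et4 by simp
  qed
  have nz4: "b4 \<noteq> 0"
  proof
    assume "b4 = 0"
    hence "X 0 - X 4 = 0" "Y 0 - Y 4 = 0" unfolding b4_def by (simp_all add: sum_power2_eq_zero_iff)
    hence "t0 = 0" unfolding t0_def by simp
    thus False using et0 by simp
  qed
  have E0: "(2*R)*t0 = b4*u0 + b0*u4" using Eid[OF c4 c0 c1] unfolding t0_def b4_def b0_def u0_def u4_def by (simp add: algebra_simps)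
  have E1: "(2*R)*t1 = b0*u1 + b1*u0" using Eid[OF c0 c1 c2] unfolding t1_def b0_def b1_def u1_def u0_def by (simp add: algebra_simps)
  have E2: "(2*R)*t2 = b1*u2 + b2*u1" using Eid[OF c1 c2 c3] unfolding t2_def b1_def b2_def u2_def u1_def by (simp add: algebra_simps)
  have E3: "(2*R)*t3 = b2*u3 + b3*u2" using Eid[OF c2 c3 c4] unfolding t3_def b2_def b3_def u3_def u2_def by (simp add: algebra_simps)
  have E4: "(2*R)*t4 = b3*u4 + b4*u3" using Eid[OF c3 c4 c0] unfolding t4_def b3_def b4_def u4_def u3_def by (simp add: algebra_simps)
  have Q0: "16*u0^2 = b0*(2*(2*R) - b0)" using Qid[OF c0 c1] unfolding b0_def u0_def .
  have Q1: "16*u1^2 = b1*(2*(2*R) - b1)" using Qid[OF c1 c2] unfolding b1_def u1_def .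
  have pd: "pent_data p 0 = e*t0" "pent_data p 1 = e*t1" "pent_data p 2 = e*t2" "pent_data p 3 = e*t3" "pent_data p 4 = e*t4"
    "pent_data p 5 = b0" "pent_data p 6 = b1" "pent_data p 7 = b2" "pent_data p 8 = b3" "pent_data p 9 = b4"
    "pent_area p = e*(u0+u1+u2+u3+u4)"
    unfolding pent_data_def using vt0 vt1 vt2 vt3 vt4 sd0 sd1 sd2 sd3 sd4 SA absE et0 et1 et2 et3 et4 eS by simp_all
  show ?thesis unfolding pd by (rule signed_core[OF e nz0 nz1 nz2 nz3 nz4 E0 E1 E2 E3 E4 Q0 Q1])
qed


definition ex_pent :: "nat \<Rightarrow> complex" where
  "ex_pent i = (if i = 0 then Complex 1 0 else if i = 1 then Complex (3/5) (4/5)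
     else if i = 2 then Complex (-4/5) (3/5) else if i = 3 then Complex (-3/5) (-4/5)
     else Complex (12/13) (-5/13))"

lemma all5: "(\<forall>i<5. P i) \<longleftrightarrow> P 0 \<and> P 1 \<and> P 2 \<and> P 3 \<and> P (4::nat)"
proof
  assume "P 0 \<and> P 1 \<and> P 2 \<and> P 3 \<and> P (4::nat)"
  moreover have "i < 5 \<Longrightarrow> i = 0 \<or> i = 1 \<or> i = 2 \<or> i = 3 \<or> i = 4" for i :: nat by presburger
  ultimately show "\<forall>i<5. P i" by blast
qed simp

lemma ex_cyc: "cyclic_pentagon ex_pent"
  unfolding cyclic_pentagon_def
proof (intro exI conjI)
  show "(1::real) > 0" by simp
  show "\<forall>i<5. cmod (ex_pent i - 0) = 1" unfolding all5
    by (simp add: ex_pent_def cmod_def power2_eq_square)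
qed

lemma ex_cvx: "convex_pentagon ex_pent"
  unfolding convex_pentagon_def
  apply (rule disjI1)
  unfolding all5
  by (simp add: vx_def ex_pent_def cross_def)

lemma ex_data: "pent_data ex_pent 0 = 7/65" "pent_data ex_pent 1 = 3/5" "pent_data ex_pent 2 = 1"
  "pent_data ex_pent 3 = 72/65" "pent_data ex_pent 4 = 18/65"
  "pent_data ex_pent 5 = 4/5" "pent_data ex_pent 6 = 2" "pent_data ex_pent 7 = 2"
  "pent_data ex_pent 8 = 162/65" "pent_data ex_pent 9 = 2/13"
  unfolding pent_data_def side_def cmod_power2 by (simp_all add: vtri_area_def vx_def ex_pent_def cross_def power2_eq_square)

lemma ex_D: "poly10_eval Dpoly (pent_data ex_pent) \<noteq> 0"
  unfolding eval_Dpoly ex_data by (simp add: Dfun_def spf_def power2_eq_square)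

theorem theorem6:
  shows "\<exists>N D :: ratpoly10.
     (\<forall>p. cyclic_pentagon p \<and> convex_pentagon p \<longrightarrow>
        poly10_eval D (pent_data p) * pent_area p = poly10_eval N (pent_data p)) \<and>
     (\<exists>p. cyclic_pentagon p \<and> convex_pentagon p \<and> poly10_eval D (pent_data p) \<noteq> 0)"
proof (rule exI[of _ Npoly], rule exI[of _ Dpoly], intro conjI allI impI)
  fix p assume "cyclic_pentagon p \<and> convex_pentagon p"
  then show "poly10_eval Dpoly (pent_data p) * pent_area p = poly10_eval Npoly (pent_data p)"
    unfolding eval_Dpoly eval_Npoly using main_id by blast
next
  show "\<exists>p. cyclic_pentagon p \<and> convex_pentagon p \<and> poly10_eval Dpoly (pent_data p) \<noteq> 0"
    using ex_cyc ex_cvx ex_D by blast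
qed

end
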